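(* For every $n\ge4$, every ortholattice satisfying $n$-Go also satisfies $(n-1)$-Go.
   Context: An ortholattice is a bounded lattice with an operation $'$ satisfying $a''=a$, $a\le b\Rightarrow b'\le a'$, $a\cap a'=0$ and $a\cup a'=1$. Write $a\to b=a'\cup(a\cap b)$. The Godowski identity is $$a_1\overset{\gamma}{\equiv}a_n=(a_1\to a_2)\cap(a_2\to a_3)\cap\cdots\cap(a_{n-1}\to a_n)\cap(a_n\to a_1),$$ and $a_n\overset{\gamma}{\equiv}a_1=(a_n\to a_{n-1})\cap\cdots\cap(a_2\to a_1)\cap(a_1\to a_n)$. $n$-Go is the equation $a_1\overset{\gamma}{\equiv}a_n=a_n\overset{\gamma}{\equiv}a_1$, required for all $a_1,\dots,a_n$. *)

theory Defs
  imports Main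
begin

definition ortholattice :: "('a::bounded_lattice \<Rightarrow> 'a) \<Rightarrow> bool" where
  "ortholattice oc \<longleftrightarrow>
     (\<forall>a. oc (oc a) = a) \<and>
     (\<forall>a b. a \<le> b \<longrightarrow> oc b \<le> oc a) \<and>
     (\<forall>a. inf a (oc a) = bot) \<and>
     (\<forall>a. sup a (oc a) = top)"

definition oimp :: "('a::bounded_lattice \<Rightarrow> 'a) \<Rightarrow> 'a \<Rightarrow> 'a \<Rightarrow> 'a" where
  "oimp oc a b = sup (oc a) (inf a b)"

definition godowski_fwd :: "('a::bounded_lattice \<Rightarrow> 'a) \<Rightarrow> (nat \<Rightarrow> 'a) \<Rightarrow> nat \<Rightarrow> 'a" where
  "godowski_fwd oc a n =
     foldr (\<lambda>i acc. inf (oimp oc (a i) (a (Suc i))) acc) [1..<n] (oimp oc (a n) (a 1))"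

definition godowski_bwd :: "('a::bounded_lattice \<Rightarrow> 'a) \<Rightarrow> (nat \<Rightarrow> 'a) \<Rightarrow> nat \<Rightarrow> 'a" where
  "godowski_bwd oc a n =
     foldr (\<lambda>i acc. inf (oimp oc (a (Suc i)) (a i)) acc) (rev [1..<n]) (oimp oc (a 1) (a n))"

definition satisfies_Go :: "('a::bounded_lattice \<Rightarrow> 'a) \<Rightarrow> nat \<Rightarrow> bool" where
  "satisfies_Go oc n \<longleftrightarrow> (\<forall>a :: nat \<Rightarrow> 'a. godowski_fwd oc a n = godowski_bwd oc a n)"

end

theory Submission
  imports Defs
begin

lemma oimp_self: "ortholattice oc \<Longrightarrow> oimp oc x x = top"
  unfolding ortholattice_def oimp_def by (simp add: sup_commute)

lemma go_step:
  fixes oc :: "'a::bounded_lattice \<Rightarrow> 'a"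
    and a :: "nat \<Rightarrow> 'a"
  assumes ol: "ortholattice oc" and m: "m \<ge> 2"
  defines "b \<equiv> a(Suc m := a m)"
  shows "godowski_fwd oc b (Suc m) = godowski_fwd oc a m"
    and "godowski_bwd oc b (Suc m) = godowski_bwd oc a m"
proof -
  have split: "[1..<Suc m] = [1..<m] @ [m]" using m by simp
  have bm: "b m = a m" "b (Suc m) = a m" "b 1 = a 1" using m by (auto simp: b_def)
  have f: "foldr (\<lambda>i acc. inf (oimp oc (b i) (b (Suc i))) acc) [1..<m] x
         = foldr (\<lambda>i acc. inf (oimp oc (a i) (a (Suc i))) acc) [1..<m] x" for x
    by (rule foldr_cong) (auto simp: b_def)
  have g: "foldr (\<lambda>i acc. inf (oimp oc (b (Suc i)) (b i)) acc) (rev [1..<m]) x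
         = foldr (\<lambda>i acc. inf (oimp oc (a (Suc i)) (a i)) acc) (rev [1..<m]) x" for x
    by (rule foldr_cong) (auto simp: b_def)
  show "godowski_fwd oc b (Suc m) = godowski_fwd oc a m"
    unfolding godowski_fwd_def split foldr_append using f bm oimp_self[OF ol] by simp
  show "godowski_bwd oc b (Suc m) = godowski_bwd oc a m"
    unfolding godowski_bwd_def split rev_append using g bm oimp_self[OF ol] by simp
qed

theorem lemma5p7:
  fixes oc :: "'a::bounded_lattice \<Rightarrow> 'a" and n :: nat
  assumes "n \<ge> 4"
    and "ortholattice oc"
    and "satisfies_Go oc n"
  shows "satisfies_Go oc (n - 1)"
proof -
  obtain m where n: "n = Suc m" and m: "m \<ge> 2" using assms(1) by (cases n) auto
  show ?thesis unfolding satisfies_Go_def n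
  proof
    fix a :: "nat \<Rightarrow> 'a"
    have "godowski_fwd oc (a(Suc m := a m)) (Suc m) = godowski_bwd oc (a(Suc m := a m)) (Suc m)"
      using assms(3) unfolding satisfies_Go_def n by blast
    then show "godowski_fwd oc a (Suc m - 1) = godowski_bwd oc a (Suc m - 1)"
      using go_step[OF assms(2) m, of a] by simp
  qed
qed

end
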